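(* Assume the standing assumptions with $0\le\mu<L$. Let $k\in\mathbb N$, $R_k\in\mathbb R$, $v_k\in\mathbb R^n$, $x_k\in\operatorname{dom} g$, $\alpha_k\in(0,1)$, $\gamma_k>0$, and let $\hat\gamma_{k+1},y_k,g_k,v_{k+1},x_{k+1}$ be produced by the stepwise weak accelerated proximal gradient step. Define $\epsilon_k:=F(x_k)-F(T_L y_k)-\langle g_k,x_k-y_k\rangle-\frac1{2L}\|g_k\|^2$ and $$R_{k+1}:=\frac12\Big(L^{-1}-\frac{\alpha_k^2}{\hat\gamma_{k+1}}\Big)\|g_k\|^2+(1-\alpha_k)\Big(\epsilon_k+R_k+\frac{\mu\alpha_k\gamma_k}{2\hat\gamma_{k+1}}\|v_k-y_k\|^2\Big).$$ Then for every $x^*\in\mathbb R^n$, $$F(x_{k+1})-F(x^* )+R_{k+1}+\frac{\hat\gamma_{k+1}}2\|v_{k+1}-x^*\|^2\le(1-\alpha_k)\Big(F(x_k)-F(x^* )+R_k+\frac{\gamma_k}{2}\|v_k-x^*\|^2\Big).$$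
   Context: Standing assumptions: $f:\mathbb R^n\to\mathbb R$ is differentiable with $L$-Lipschitz gradient and $\mu$-strongly convex ($\mu\ge0$); $g:\mathbb R^n\to\mathbb R\cup\{+\infty\}$ proper, closed, convex; $F=f+g$. $T_L(y):=\operatorname{argmin}_x\{g(x)+\langle\nabla f(y),x\rangle+\frac L2\|x-y\|^2\}$, $\mathcal G_L(y):=L(y-T_L(y))$. Stepwise weak accelerated proximal gradient step: given $v_k,x_k$, $\alpha_k\in(0,1)$, $\gamma_k>0$, set $\hat\gamma_{k+1}:=(1-\alpha_k)\gamma_k+\mu\alpha_k$, $y_k:=(\gamma_k+\alpha_k\mu)^{-1}(\alpha_k\gamma_k v_k+\hat\gamma_{k+1}x_k)$, $g_k:=\mathcal G_L(y_k)$, $v_{k+1}:=\hat\gamma_{k+1}^{-1}(\gamma_k(1-\alpha_k)v_k-\alpha_k g_k+\mu\alpha_k y_k)$, $x_{k+1}:=T_L(y_k)$. *)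

theory Defs
  imports "HOL-Analysis.Analysis"
begin

definition proper_fun :: "('a \<Rightarrow> ereal) \<Rightarrow> bool" where
  "proper_fun g \<longleftrightarrow> (\<forall>x. g x \<noteq> -\<infinity>) \<and> (\<exists>x. g x \<noteq> \<infinity>)"

definition convex_fun :: "('a::real_vector \<Rightarrow> ereal) \<Rightarrow> bool" where
  "convex_fun g \<longleftrightarrow> (\<forall>x y t. 0 < t \<and> t < 1 \<longrightarrow>
      g (t *\<^sub>R x + (1 - t) *\<^sub>R y) \<le> ereal t * g x + ereal (1 - t) * g y)"

definition closed_fun :: "('a::topological_space \<Rightarrow> ereal) \<Rightarrow> bool" where
  "closed_fun g \<longleftrightarrow> closed {(x, t::real). g x \<le> ereal t}"

definition dom_fun :: "('a \<Rightarrow> ereal) \<Rightarrow> 'a set" where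
  "dom_fun g = {x. g x < \<infinity>}"

definition strongly_convex :: "real \<Rightarrow> ('a::real_normed_vector \<Rightarrow> real) \<Rightarrow> bool" where
  "strongly_convex \<mu> f \<longleftrightarrow> (\<forall>x y t. 0 \<le> t \<and> t \<le> 1 \<longrightarrow>
      f (t *\<^sub>R x + (1 - t) *\<^sub>R y) \<le> t * f x + (1 - t) * f y - \<mu> / 2 * t * (1 - t) * (norm (x - y))\<^sup>2)"

text \<open>T_L(y) = argmin_x { g x + <grad f y, x> + L/2 |x - y|^2 }, with df the gradient of f.\<close>
definition prox_obj :: "real \<Rightarrow> ('a::real_inner \<Rightarrow> 'a) \<Rightarrow> ('a \<Rightarrow> ereal) \<Rightarrow> 'a \<Rightarrow> 'a \<Rightarrow> ereal" where
  "prox_obj L df g y x = g x + ereal (inner (df y) x + L / 2 * (norm (x - y))\<^sup>2)"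

definition T_L :: "real \<Rightarrow> ('a::real_inner \<Rightarrow> 'a) \<Rightarrow> ('a \<Rightarrow> ereal) \<Rightarrow> 'a \<Rightarrow> 'a" where
  "T_L L df g y = (THE x. \<forall>z. prox_obj L df g y x \<le> prox_obj L df g y z)"

definition G_L :: "real \<Rightarrow> ('a::real_inner \<Rightarrow> 'a) \<Rightarrow> ('a \<Rightarrow> ereal) \<Rightarrow> 'a \<Rightarrow> 'a" where
  "G_L L df g y = L *\<^sub>R (y - T_L L df g y)"

end

theory Submission
  imports Defs
begin

lemma norm_convex_comb:
  fixes a b :: "'a::real_inner"
  shows "(norm (t *\<^sub>R a + (1-t) *\<^sub>R b))^2 = t*(norm a)^2 + (1-t)*(norm b)^2 - t*(1-t)*(norm (a-b))^2"
  unfolding power2_norm_eq_inner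
  by (simp add: inner_simps inner_commute algebra_simps power2_eq_square)

lemma compact_lsc_min:
  fixes h :: "'a::topological_space \<Rightarrow> ereal"
  assumes K: "compact K" "K \<noteq> {}" and cl: "\<And>c. closed {x. h x \<le> c}"
  shows "\<exists>z\<in>K. \<forall>x\<in>K. h z \<le> h x"
proof (rule ccontr)
  assume "\<not> ?thesis"
  then have nm: "\<forall>z\<in>K. \<exists>x\<in>K. h x < h z" by (auto simp: not_le)
  have op: "open {w. h c < h w}" for c
  proof -
    have "{w. h c < h w} = - {w. h w \<le> h c}" by (auto simp: not_le)
    then show ?thesis using cl[of "h c"] by (simp add: open_Compl)
  qed
  have cov: "K \<subseteq> (\<Union>c\<in>K. {w. h c < h w})" using nm by blast
  obtain T where T: "T \<subseteq> K" "finite T" "K \<subseteq> (\<Union>c\<in>T. {w. h c < h w})"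
    using compactE_image[OF K(1) op cov] by metis
  then have Tne: "T \<noteq> {}" using K(2) by auto
  have "Min (h ` T) \<in> h ` T" using T Tne by (intro Min_in) auto
  then obtain z where z: "z \<in> T" "h z = Min (h ` T)" by auto
  then have "z \<in> K" using T by auto
  then obtain c where c: "c \<in> T" "h c < h z" using T(3) by auto
  moreover have "h z \<le> h c" using z c T by (simp add: Min_le)
  ultimately show False by simp
qed

lemma line_deriv:
  fixes f :: "'a::real_inner \<Rightarrow> real"
  assumes "GDERIV f (y + t *\<^sub>R u) :> D"
  shows "((\<lambda>s. f (y + s *\<^sub>R u)) has_real_derivative inner u D) (at t)"
proof -
  have 1: "((\<lambda>s. y + s *\<^sub>R u) has_derivative (\<lambda>h. h *\<^sub>R u)) (at t)"
    by (auto intro!: derivative_eq_intros)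
  have 2: "(f has_derivative (\<lambda>h. inner h D)) (at (y + t *\<^sub>R u))" using assms by (simp add: gderiv_def)
  have "((\<lambda>s. f (y + s *\<^sub>R u)) has_derivative (\<lambda>h. inner (h *\<^sub>R u) D)) (at t)"
    using has_derivative_compose[OF 1 2] by simp
  moreover have "(\<lambda>h. inner (h *\<^sub>R u) D) = (*) (inner u D)" by (auto simp: fun_eq_iff)
  ultimately show ?thesis by (simp add: has_field_derivative_def)
qed

lemma sc_lower:
  fixes f :: "'a::real_inner \<Rightarrow> real"
  assumes grad: "\<forall>x. GDERIV f x :> df x" and sc: "strongly_convex \<mu> f"
  shows "f x \<ge> f y + inner (df y) (x - y) + \<mu>/2*(norm (x-y))^2"
proof -
  define u where "u = x - y"
  have d: "((\<lambda>s. f (y + s *\<^sub>R u)) has_real_derivative inner u (df y)) (at 0)"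
    using line_deriv[of f y 0 u "df y"] grad by simp
  then have d2: "((\<lambda>s. f (y + s *\<^sub>R u)) has_real_derivative inner u (df y)) (at_right 0)"
    by (rule has_field_derivative_at_within)
  have lim1: "((\<lambda>t. (f (y + t *\<^sub>R u) - f y) / t) \<longlongrightarrow> inner u (df y)) (at_right 0)"
    using d2 unfolding has_field_derivative_iff by simp
  have lim2: "((\<lambda>t. f x - f y - \<mu>/2*(1-t)*(norm u)^2) \<longlongrightarrow> f x - f y - \<mu>/2*(1-0)*(norm u)^2) (at_right (0::real))"
    by (intro tendsto_intros)
  have ev: "eventually (\<lambda>t. (f (y + t *\<^sub>R u) - f y) / t \<le> f x - f y - \<mu>/2*(1-t)*(norm u)^2) (at_right 0)"
  proof (rule eventually_at_rightI[of 0 1])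
    fix t :: real assume t: "t \<in> {0<..<1}"
    have "f (t *\<^sub>R x + (1 - t) *\<^sub>R y) \<le> t * f x + (1 - t) * f y - \<mu> / 2 * t * (1 - t) * (norm (x - y))\<^sup>2"
      using sc t unfolding strongly_convex_def by auto
    moreover have "t *\<^sub>R x + (1 - t) *\<^sub>R y = y + t *\<^sub>R u" by (simp add: u_def algebra_simps)
    ultimately have "f (y + t *\<^sub>R u) - f y \<le> t * (f x - f y - \<mu>/2*(1-t)*(norm u)^2)"
      by (simp add: u_def algebra_simps)
    then show "(f (y + t *\<^sub>R u) - f y) / t \<le> f x - f y - \<mu>/2*(1-t)*(norm u)^2"
      using t by (simp add: divide_le_eq mult.commute)
  qed simp
  have "inner u (df y) \<le> f x - f y - \<mu>/2*(1-0)*(norm u)^2"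
    using tendsto_le[OF trivial_limit_at_right_real lim2 lim1 ev] .
  then show ?thesis by (simp add: u_def inner_commute)
qed

lemma descent:
  fixes f :: "'a::real_inner \<Rightarrow> real"
  assumes grad: "\<forall>x. GDERIV f x :> df x" and lip: "\<forall>x y. norm (df x - df y) \<le> L * norm (x - y)"
  shows "f z \<le> f y + inner (df y) (z - y) + L/2*(norm (z-y))^2"
proof -
  define u where "u = z - y"
  define psi where "psi s = f (y + s *\<^sub>R u) - s * inner (df y) u - L/2*(s * s)*(norm u)^2" for s
  have "psi 1 \<le> psi 0"
  proof (rule DERIV_nonpos_imp_nonincreasing[of 0 1 psi])
    fix s :: real assume s: "0 \<le> s" "s \<le> 1"
    have D: "(psi has_real_derivative (inner u (df (y + s *\<^sub>R u)) - inner (df y) u - L/2*(2 * s)*(norm u)^2)) (at s)"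
      unfolding psi_def
      using grad by (auto intro!: derivative_eq_intros line_deriv)
    have "inner u (df (y + s *\<^sub>R u)) - inner (df y) u = inner u (df (y + s *\<^sub>R u) - df y)"
      by (simp add: inner_diff_right inner_commute)
    also have "\<dots> \<le> norm u * norm (df (y + s *\<^sub>R u) - df y)" by (rule norm_cauchy_schwarz)
    also have "\<dots> \<le> norm u * (L * norm (s *\<^sub>R u))"
      using lip[rule_format, of "y + s *\<^sub>R u" y] by (simp add: mult_left_mono)
    also have "\<dots> = L/2*(2 * s)*(norm u)^2" using s by (simp add: power2_eq_square)
    finally show "\<exists>d. DERIV psi s :> d \<and> d \<le> 0" using D by (intro exI[of _ "_ - _ - _"]) auto
  qed simp
  then show ?thesis by (simp add: psi_def u_def inner_commute)
qed

lemma prox_obj_fin: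
  "g x \<noteq> \<infinity> \<Longrightarrow> g x \<noteq> -\<infinity> \<Longrightarrow> prox_obj L df g y x = ereal (real_of_ereal (g x) + (inner (df y) x + L/2*(norm (x-y))^2))"
  by (cases "g x") (auto simp: prox_obj_def)

lemma prox_obj_inf: "g x = \<infinity> \<Longrightarrow> prox_obj L df g y x = \<infinity>"
  by (simp add: prox_obj_def)

lemma proper_ninf: "proper_fun g \<Longrightarrow> g x \<noteq> -\<infinity>"
  by (simp add: proper_fun_def)

lemma prox_closed:
  fixes g :: "'a::real_inner \<Rightarrow> ereal"
  assumes gprop: "proper_fun g" and gclosed: "closed_fun g"
  shows "closed {x. prox_obj L df g y x \<le> c}"
proof (cases c)
  case (real r)
  define q where "q x = inner (df y) x + L/2*(norm (x-y))^2" for x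
  have "{x. prox_obj L df g y x \<le> c} = (\<lambda>x. (x, r - q x)) -` {(x, t::real). g x \<le> ereal t}"
  proof (intro set_eqI iffI)
    fix x assume "x \<in> {x. prox_obj L df g y x \<le> c}"
    then show "x \<in> (\<lambda>x. (x, r - q x)) -` {(x, t::real). g x \<le> ereal t}"
      using proper_ninf[OF gprop, of x] real
      by (cases "g x") (auto simp: prox_obj_def q_def)
  next
    fix x assume "x \<in> (\<lambda>x. (x, r - q x)) -` {(x, t::real). g x \<le> ereal t}"
    then show "x \<in> {x. prox_obj L df g y x \<le> c}"
      using proper_ninf[OF gprop, of x] real
      by (cases "g x") (auto simp: prox_obj_def q_def)
  qed
  moreover have "closed {(x, t::real). g x \<le> ereal t}" using gclosed by (simp add: closed_fun_def)
  moreover have "continuous (at x) (\<lambda>x. (x, r - q x))" for x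
    unfolding q_def by (intro continuous_intros)
  ultimately show ?thesis by (metis (no_types, lifting) continuous_closed_vimage)
next
  case PInf
  then show ?thesis by simp
next
  case MInf
  have "{x. prox_obj L df g y x \<le> c} = {}"
    using proper_ninf[OF gprop] MInf by (auto simp: prox_obj_def)
  then show ?thesis by simp
qed

lemma prox_sc:
  fixes g :: "'a::real_inner \<Rightarrow> ereal" and d y :: 'a and L :: real
  assumes gprop: "proper_fun g" and gconv: "convex_fun g"
    and fin: "g x1 \<noteq> \<infinity>" "g x2 \<noteq> \<infinity>" and t: "0 < t" "t < 1"
  defines "Hr \<equiv> \<lambda>x. real_of_ereal (g x) + (inner d x + L/2*(norm (x-y))^2)"
  shows "g (t *\<^sub>R x1 + (1-t) *\<^sub>R x2) \<noteq> \<infinity> \<and>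
    Hr (t *\<^sub>R x1 + (1-t) *\<^sub>R x2) \<le> t * Hr x1 + (1-t) * Hr x2 - L/2*t*(1-t)*(norm (x1-x2))^2"
proof -
  define w where "w = t *\<^sub>R x1 + (1-t) *\<^sub>R x2"
  obtain a1 a2 where a: "g x1 = ereal a1" "g x2 = ereal a2"
    using fin proper_ninf[OF gprop, of x1] proper_ninf[OF gprop, of x2] by (cases "g x1"; cases "g x2") auto
  have "g w \<le> ereal t * g x1 + ereal (1 - t) * g x2"
    using gconv t unfolding convex_fun_def w_def by auto
  then have gw: "g w \<le> ereal (t*a1 + (1-t)*a2)" using a by simp
  then obtain aw where aw: "g w = ereal aw" "aw \<le> t*a1 + (1-t)*a2"
    using proper_ninf[OF gprop, of w] by (cases "g w") auto
  have "w - y = t *\<^sub>R (x1 - y) + (1-t) *\<^sub>R (x2 - y)" by (simp add: w_def algebra_simps)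
  then have nw: "(norm (w - y))^2 = t*(norm (x1-y))^2 + (1-t)*(norm (x2-y))^2 - t*(1-t)*(norm (x1-x2))^2"
    using norm_convex_comb[of t "x1 - y" "x2 - y"] by simp
  have iw: "inner d w = t * inner d x1 + (1-t) * inner d x2" by (simp add: w_def inner_simps)
  have "t * Hr x1 + (1-t) * Hr x2 - L/2*t*(1-t)*(norm (x1-x2))^2
      = t*a1 + (1-t)*a2 + inner d w + L/2*(norm (w-y))^2"
    unfolding Hr_def a nw iw by (simp add: field_simps)
  moreover have "Hr w = aw + inner d w + L/2*(norm (w-y))^2" by (simp add: Hr_def aw)
  ultimately show ?thesis using aw by (simp add: w_def[symmetric])
qed

lemma eps_le:
  fixes A c :: real
  assumes h: "\<And>t. 0 < t \<Longrightarrow> t < 1 \<Longrightarrow> c*(1-t) \<le> A" and c: "0 \<le> c"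
  shows "c \<le> A"
proof (rule ccontr)
  assume "\<not> c \<le> A"
  then have lt: "A < c" by simp
  have "c*(1-1/2) \<le> A" using h[of "1/2"] by simp
  then have cp: "c > 0" "A \<ge> c/2" using c lt by auto
  define t where "t = (c - A)/(2*c)"
  have t0: "0 < t" using lt cp by (simp add: t_def)
  have t1: "t < 1" using lt cp by (simp add: t_def field_simps)
  have "c*(1-t) = (c + A)/2" using cp by (simp add: t_def field_simps)
  then show False using h[OF t0 t1] lt by simp
qed

lemma prox_min:
  fixes g :: "'a::euclidean_space \<Rightarrow> ereal"
  assumes gprop: "proper_fun g" and gconv: "convex_fun g" and gclosed: "closed_fun g" and L: "L > 0"
  shows "g (T_L L df g y) \<noteq> \<infinity> \<and> (\<forall>w. prox_obj L df g y (T_L L df g y) \<le> prox_obj L df g y w)"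
proof -
  define h where "h = prox_obj L df g y"
  define Hr where "Hr = (\<lambda>x. real_of_ereal (g x) + (inner (df y) x + L/2*(norm (x-y))^2))"
  have hfin: "\<And>x. g x \<noteq> \<infinity> \<Longrightarrow> h x = ereal (Hr x)"
    unfolding h_def Hr_def using prox_obj_fin proper_ninf[OF gprop] by blast
  have hinf: "\<And>x. g x = \<infinity> \<Longrightarrow> h x = \<infinity>" unfolding h_def by (rule prox_obj_inf)
  have cl: "\<And>c. closed {x. h x \<le> c}" unfolding h_def using prox_closed[OF gprop gclosed] .
  have hfin': "\<And>x z. h z \<le> h x \<Longrightarrow> g x \<noteq> \<infinity> \<Longrightarrow> g z \<noteq> \<infinity>"
    using hfin hinf by force
  have sc: "\<And>x1 x2 t. g x1 \<noteq> \<infinity> \<Longrightarrow> g x2 \<noteq> \<infinity> \<Longrightarrow> 0 < t \<Longrightarrow> t < 1 \<Longrightarrow>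
      g (t *\<^sub>R x1 + (1-t) *\<^sub>R x2) \<noteq> \<infinity> \<and>
      Hr (t *\<^sub>R x1 + (1-t) *\<^sub>R x2) \<le> t * Hr x1 + (1-t) * Hr x2 - L/2*t*(1-t)*(norm (x1-x2))^2"
    unfolding Hr_def by (rule prox_sc[OF gprop gconv])
  obtain x0 where x0: "g x0 \<noteq> \<infinity>" using gprop by (auto simp: proper_fun_def)
  obtain z1 where z1: "z1 \<in> cball x0 1" "\<forall>x\<in>cball x0 1. h z1 \<le> h x"
    using compact_lsc_min[of "cball x0 1" h] cl by auto
  have gz1: "g z1 \<noteq> \<infinity>" using hfin'[of z1 x0] z1 x0 by auto
  define m1 where "m1 = Hr z1"
  define h0 where "h0 = Hr x0"
  have low1: "\<And>w. w \<in> cball x0 1 \<Longrightarrow> g w \<noteq> \<infinity> \<Longrightarrow> m1 \<le> Hr w"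
    using z1 hfin gz1 unfolding m1_def by fastforce
  have m1h0: "m1 \<le> h0" using low1[of x0] x0 by (simp add: h0_def)
  define R where "R = 2 + 2*(h0 - m1)/L"
  have R2: "R \<ge> 2" using m1h0 L by (simp add: R_def)
  have far: "Hr x > h0" if xR: "norm (x - x0) \<ge> R" and gx: "g x \<noteq> \<infinity>" for x
  proof -
    define dd where "dd = norm (x - x0)"
    have dd2: "dd \<ge> 2" using xR R2 by (simp add: dd_def)
    define t where "t = 1/dd"
    have t: "0 < t" "t < 1" using dd2 by (auto simp: t_def)
    define w where "w = t *\<^sub>R x + (1-t) *\<^sub>R x0"
    have "w - x0 = t *\<^sub>R (x - x0)" by (simp add: w_def algebra_simps)
    moreover have "x \<noteq> x0" using dd2 by (auto simp: dd_def)
    ultimately have "norm (w - x0) = 1" using dd2 by (simp add: t_def dd_def)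
    then have wb: "w \<in> cball x0 1" by (simp add: dist_norm norm_minus_commute)
    have s: "g w \<noteq> \<infinity>" "Hr w \<le> t * Hr x + (1-t) * h0 - L/2*t*(1-t)*dd^2"
      using sc[OF gx x0 t] by (auto simp: w_def h0_def dd_def)
    have "m1 \<le> t * Hr x + (1-t) * h0 - L/2*t*(1-t)*dd^2" using low1[OF wb s(1)] s(2) by simp
    then have "dd * m1 \<le> dd * (t * Hr x + (1-t) * h0 - L/2*t*(1-t)*dd^2)"
      using dd2 by (simp add: mult_left_mono)
    also have "\<dots> = Hr x + (dd-1)*h0 - L/2*(dd-1)*dd"
      using dd2 by (simp add: t_def field_simps power2_eq_square)
    finally have A: "Hr x \<ge> h0 + dd * (m1 - h0 + L/2*(dd-1))" by (simp add: algebra_simps)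
    have "L/2*(dd-1) \<ge> L/2*(R-1)" using xR L by (intro mult_left_mono) (auto simp: dd_def)
    moreover have "L/2*(R-1) = L/2 + (h0 - m1)" using L by (simp add: R_def field_simps)
    ultimately have "m1 - h0 + L/2*(dd-1) > 0" using L by linarith
    then have "dd * (m1 - h0 + L/2*(dd-1)) > 0" using dd2 by simp
    then show ?thesis using A by simp
  qed
  obtain z2 where z2: "z2 \<in> cball x0 R" "\<forall>x\<in>cball x0 R. h z2 \<le> h x"
    using compact_lsc_min[of "cball x0 R" h] cl R2 by auto
  have x0R: "x0 \<in> cball x0 R" using R2 by simp
  have gz2: "g z2 \<noteq> \<infinity>" using hfin'[of z2 x0] z2 x0 x0R by auto
  have glob: "\<forall>w. h z2 \<le> h w"
  proof
    fix w
    show "h z2 \<le> h w"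
    proof (cases "w \<in> cball x0 R")
      case True then show ?thesis using z2 by auto
    next
      case False
      show ?thesis
      proof (cases "g w = \<infinity>")
        case True then show ?thesis using hinf by simp
      next
        case gw: False
        have "norm (x0 - w) > R" using False by (simp add: dist_norm)
        then have "Hr w > h0" using far[OF _ gw] by (simp add: norm_minus_commute)
        moreover have "h z2 \<le> ereal h0" using z2(2) x0R hfin[OF x0] unfolding h0_def by metis
        moreover have "ereal h0 \<le> ereal (Hr w)" using \<open>Hr w > h0\<close> by simp
        ultimately have "h z2 \<le> ereal (Hr w)" by (meson order_trans)
        then show ?thesis using hfin[OF gw] by simp
      qed
    qed
  qed
  have uniq: "z' = z2" if z': "\<forall>w. h z' \<le> h w" for z'
  proof -
    have gz': "g z' \<noteq> \<infinity>" using hfin'[of z' x0] z' x0 by auto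
    have eq: "Hr z' = Hr z2" using z'[rule_format, of z2] glob[rule_format, of z'] hfin[OF gz'] hfin[OF gz2] by simp
    define w where "w = (1/2) *\<^sub>R z' + (1 - 1/2) *\<^sub>R z2"
    have s: "g w \<noteq> \<infinity>" "Hr w \<le> 1/2 * Hr z' + (1-1/2) * Hr z2 - L/2*(1/2)*(1-1/2)*(norm (z'-z2))^2"
      using sc[OF gz' gz2, of "1/2"] by (auto simp: w_def)
    have "Hr z2 \<le> Hr w" using glob hfin[OF s(1)] hfin[OF gz2] by (metis ereal_less_eq(3))
    then have "L/2*(1/2)*(1-1/2)*(norm (z'-z2))^2 \<le> 0" using s(2) eq by simp
    then have "(norm (z'-z2))^2 \<le> 0" using L by (simp add: mult_le_0_iff)
    then show ?thesis by simp
  qed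
  have "T_L L df g y = z2" unfolding T_L_def
  proof (rule the_equality)
    show "\<forall>z. prox_obj L df g y z2 \<le> prox_obj L df g y z" using glob unfolding h_def .
    fix x assume "\<forall>z. prox_obj L df g y x \<le> prox_obj L df g y z"
    then show "x = z2" using uniq unfolding h_def by blast
  qed
  then show ?thesis using gz2 glob unfolding h_def by simp
qed

lemma prox_subgrad:
  fixes g :: "'a::real_inner \<Rightarrow> ereal"
  assumes gprop: "proper_fun g" and gconv: "convex_fun g" and L: "L > 0"
    and zmin: "\<forall>w. prox_obj L df g y z \<le> prox_obj L df g y w"
    and gz: "g z \<noteq> \<infinity>" and gx: "g x \<noteq> \<infinity>"
  shows "real_of_ereal (g x) \<ge> real_of_ereal (g z) + inner (L *\<^sub>R (y - z) - df y) (x - z)"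
proof -
  define Hr where "Hr = (\<lambda>x. real_of_ereal (g x) + (inner (df y) x + L/2*(norm (x-y))^2))"
  have hfin: "\<And>x. g x \<noteq> \<infinity> \<Longrightarrow> prox_obj L df g y x = ereal (Hr x)"
    unfolding Hr_def using prox_obj_fin proper_ninf[OF gprop] by blast
  define n where "n = (norm (x - z))^2"
  have A: "(L/2*n)*(1-t) \<le> Hr x - Hr z" if t: "0 < t" "t < 1" for t
  proof -
    define w where "w = t *\<^sub>R x + (1-t) *\<^sub>R z"
    have s: "g w \<noteq> \<infinity>" "Hr w \<le> t * Hr x + (1-t) * Hr z - L/2*t*(1-t)*n"
      using prox_sc[OF gprop gconv gx gz t, of "df y" L y] unfolding Hr_def n_def w_def by auto
    have "Hr z \<le> Hr w" using zmin hfin[OF s(1)] hfin[OF gz] by (metis ereal_less_eq(3))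
    then have "t * ((L/2*n)*(1-t)) \<le> t * (Hr x - Hr z)" using s(2) by (simp add: algebra_simps)
    then show ?thesis using t by simp
  qed
  have B: "L/2*n \<le> Hr x - Hr z" by (rule eps_le[OF A]) (use L in \<open>auto simp: n_def\<close>)
  have nx: "(norm (x-y))^2 = n + 2 * inner (x - z) (z - y) + (norm (z-y))^2"
  proof -
    have "x - y = (x - z) + (z - y)" by simp
    then show ?thesis unfolding n_def power2_norm_eq_inner
      by (metis (no_types, lifting) inner_add_left inner_add_right inner_commute mult_2 add.assoc)
  qed
  have ip: "inner (L *\<^sub>R (y - z) - df y) (x - z) = - (L * inner (x - z) (z - y)) - (inner (df y) x - inner (df y) z)"
    by (simp add: inner_simps inner_commute algebra_simps)
  have nx2: "L/2*(norm (x-y))^2 = L/2*n + L * inner (x - z) (z - y) + L/2*(norm (z-y))^2"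
    unfolding nx by (simp add: distrib_left)
  have B2: "L/2*n \<le> real_of_ereal (g x) + (inner (df y) x + L/2*(norm (x-y))^2)
      - (real_of_ereal (g z) + (inner (df y) z + L/2*(norm (z-y))^2))"
    using B unfolding Hr_def by simp
  show ?thesis using B2 nx2 ip by linarith
qed

lemma quad_ident:
  fixes v y gk xs :: "'a::real_inner" and a \<gamma> \<mu> gh :: real
  assumes "gh = (1-a)*\<gamma> + \<mu>*a"
  shows "2*gh*a*inner gk (xs-y) + 2*(1-a)*a*\<gamma>*inner gk (y-v) + a^2*(norm gk)^2
   - (1-a)*\<mu>*a*\<gamma>*(norm (v-y))^2 - (norm ((\<gamma>*(1-a)) *\<^sub>R v - a *\<^sub>R gk + (\<mu>*a) *\<^sub>R y - gh *\<^sub>R xs))^2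
   + gh*(1-a)*\<gamma>*(norm(v-xs))^2 + gh*a*\<mu>*(norm(xs-y))^2 = 0"
  unfolding assms power2_norm_eq_inner
  by (simp add: inner_simps inner_commute algebra_simps power2_eq_square)

lemma real_alg:
  fixes a \<gamma> \<mu> gh L Fs Fz Fx R ip1 ip2 gg n1 n2 n3 n4 :: real
  assumes gh: "gh \<noteq> 0" and L: "L \<noteq> 0"
  shows "(Fz - Fs + (1/2*(inverse L - a^2/gh)*gg + (1-a)*((Fx - Fz - (ip2 + 1/(2*L)*gg)) + R + \<mu>*a*\<gamma>/(2*gh)*n2)) + gh/2*n3)
     - ((1-a)*(Fx - Fs + R + \<gamma>/2*n4))
   = a*(Fz + ip1 + 1/(2*L)*gg + \<mu>/2*n1 - Fs)
     - (2*gh*a*ip1 + 2*(1-a)*gh*ip2 + a^2*gg - (1-a)*\<mu>*a*\<gamma>*n2 - gh^2*n3 + gh*(1-a)*\<gamma>*n4 + gh*a*\<mu>*n1)/(2*gh)"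
  using gh L by (simp add: field_simps inverse_eq_divide power2_eq_square)

lemma combine:
  fixes d gk xs y z :: "'a::real_inner"
  assumes gk: "gk = L *\<^sub>R (y - z)" and L: "L > 0"
    and A: "fxs \<ge> fy + inner d (xs - y) + \<mu>/2*(norm (xs-y))^2"
    and B: "fz \<le> fy + inner d (z - y) + L/2*(norm (z-y))^2"
    and C: "Gs \<ge> Gz + inner (gk - d) (xs - z)"
  shows "fxs + Gs \<ge> fz + Gz + inner gk (xs - y) + 1/(2*L)*(norm gk)^2 + \<mu>/2*(norm (xs-y))^2"
proof -
  have c1: "inner (gk - d) (xs - z) = inner gk (xs - y) + L * (norm (y - z))^2 - inner d (xs - y) + inner d (z - y)"
    unfolding gk power2_norm_eq_inner by (simp add: inner_simps algebra_simps)
  have c2: "1/(2*L)*(norm gk)^2 = L/2*(norm (y-z))^2"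
  proof -
    have "norm gk = L * norm (y - z)" unfolding gk norm_scaleR using L by simp
    then show ?thesis using L by (simp add: power2_eq_square field_simps)
  qed
  have c3: "norm (z - y) = norm (y - z)" by (rule norm_minus_commute)
  show ?thesis using A B C c1 c2 c3 by (simp add: algebra_simps)
qed


lemma final_alg:
  fixes v x gk xs y v1 :: "'a::real_inner"
  assumes gh: "gh = (1-a)*\<gamma> + \<mu>*a" "gh > 0" and s: "\<gamma> + a*\<mu> > 0" and L: "L \<noteq> 0" and a0: "0 \<le> a"
    and y: "y = inverse (\<gamma> + a*\<mu>) *\<^sub>R ((a*\<gamma>) *\<^sub>R v + gh *\<^sub>R x)"
    and v1: "v1 = inverse gh *\<^sub>R ((\<gamma>*(1-a)) *\<^sub>R v - a *\<^sub>R gk + (\<mu>*a) *\<^sub>R y)"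
    and key: "Fs \<ge> Fz + inner gk (xs - y) + 1/(2*L)*(norm gk)^2 + \<mu>/2*(norm (xs-y))^2"
  shows "Fz - Fs + (1/2*(inverse L - a^2/gh)*(norm gk)^2 + (1-a)*((Fx - Fz - (inner gk (x - y) + 1/(2*L)*(norm gk)^2)) + R + \<mu>*a*\<gamma>/(2*gh)*(norm (v - y))^2)) + gh/2*(norm (v1 - xs))^2
     \<le> (1-a)*(Fx - Fs + R + \<gamma>/2*(norm (v - xs))^2)"
proof -
  have V1: "gh *\<^sub>R v1 = (\<gamma>*(1-a)) *\<^sub>R v - a *\<^sub>R gk + (\<mu>*a) *\<^sub>R y"
    using gh(2) unfolding v1 by simp
  have W: "gh *\<^sub>R (v1 - xs) = (\<gamma>*(1-a)) *\<^sub>R v - a *\<^sub>R gk + (\<mu>*a) *\<^sub>R y - gh *\<^sub>R xs"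
    using V1 by (simp add: scaleR_diff_right)
  have "(norm (gh *\<^sub>R (v1 - xs)))^2 = gh^2*(norm (v1-xs))^2" using gh(2) by (simp add: power_mult_distrib)
  then have n3: "(norm ((\<gamma>*(1-a)) *\<^sub>R v - a *\<^sub>R gk + (\<mu>*a) *\<^sub>R y - gh *\<^sub>R xs))^2 = gh^2*(norm (v1-xs))^2"
    using W by simp
  have Y: "(\<gamma> + a*\<mu>) *\<^sub>R y = (a*\<gamma>) *\<^sub>R v + gh *\<^sub>R x" using s unfolding y by simp
  then have "gh *\<^sub>R x = (\<gamma> + a*\<mu>) *\<^sub>R y - (a*\<gamma>) *\<^sub>R v" by (simp add: algebra_simps)
  then have "gh *\<^sub>R (x - y) = (\<gamma> + a*\<mu> - gh) *\<^sub>R y - (a*\<gamma>) *\<^sub>R v"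
    by (simp add: scaleR_diff_right scaleR_diff_left)
  also have "\<gamma> + a*\<mu> - gh = a*\<gamma>" using gh(1) by (simp add: algebra_simps)
  finally have Xv: "gh *\<^sub>R (x - y) = (a*\<gamma>) *\<^sub>R (y - v)" by (simp add: scaleR_diff_right)
  have ip2: "gh * inner gk (x - y) = a*\<gamma>*inner gk (y - v)"
    using arg_cong[OF Xv, of "inner gk"] by simp
  have e2: "2*(1-a)*a*\<gamma>*inner gk (y-v) = 2*(1-a)*gh*inner gk (x-y)"
    using ip2 by (simp add: mult.assoc)
  have I: "2*gh*a*inner gk (xs-y) + 2*(1-a)*a*\<gamma>*inner gk (y-v) + a^2*(norm gk)^2
   - (1-a)*\<mu>*a*\<gamma>*(norm (v-y))^2 - (norm ((\<gamma>*(1-a)) *\<^sub>R v - a *\<^sub>R gk + (\<mu>*a) *\<^sub>R y - gh *\<^sub>R xs))^2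
   + gh*(1-a)*\<gamma>*(norm(v-xs))^2 + gh*a*\<mu>*(norm(xs-y))^2 = 0"
    by (rule quad_ident[OF gh(1)])
  have I2: "2*gh*a*inner gk (xs-y) + 2*(1-a)*gh*inner gk (x-y) + a^2*(norm gk)^2
   - (1-a)*\<mu>*a*\<gamma>*(norm (v-y))^2 - gh^2*(norm (v1-xs))^2
   + gh*(1-a)*\<gamma>*(norm(v-xs))^2 + gh*a*\<mu>*(norm(xs-y))^2 = 0"
    using I n3 e2 by linarith
  have ka: "a*(Fz + inner gk (xs - y) + 1/(2*L)*(norm gk)^2 + \<mu>/2*(norm (xs-y))^2 - Fs) \<le> 0"
    using key a0 by (simp add: mult_nonneg_nonpos)
  show ?thesis
    using real_alg[OF _ L, of gh Fz Fs a "(norm gk)^2" Fx "inner gk (x - y)" R \<mu> \<gamma> "(norm (v - y))^2"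
        "(norm (v1 - xs))^2" "(norm (v - xs))^2" "inner gk (xs - y)" "(norm (xs-y))^2"] gh(2) I2 ka
    by simp
qed

theorem mainTheorem4:
  fixes f :: "'a::euclidean_space \<Rightarrow> real" and df :: "'a \<Rightarrow> 'a"
    and g :: "'a \<Rightarrow> ereal" and L \<mu> :: real
    and k :: nat and R_k \<alpha>_k \<gamma>_k :: real and v_k x_k x_star :: 'a
  defines "F \<equiv> (\<lambda>x. ereal (f x) + g x)"
    and "\<gamma>_hat \<equiv> (1 - \<alpha>_k) * \<gamma>_k + \<mu> * \<alpha>_k"
  defines "y_k \<equiv> inverse (\<gamma>_k + \<alpha>_k * \<mu>) *\<^sub>R ((\<alpha>_k * \<gamma>_k) *\<^sub>R v_k + \<gamma>_hat *\<^sub>R x_k)"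
  defines "g_k \<equiv> G_L L df g y_k"
  defines "v_k1 \<equiv> inverse \<gamma>_hat *\<^sub>R ((\<gamma>_k * (1 - \<alpha>_k)) *\<^sub>R v_k - \<alpha>_k *\<^sub>R g_k + (\<mu> * \<alpha>_k) *\<^sub>R y_k)"
    and "x_k1 \<equiv> T_L L df g y_k"
  defines "\<epsilon>_k \<equiv> F x_k - F (T_L L df g y_k)
               - ereal (inner g_k (x_k - y_k) + 1 / (2 * L) * (norm g_k)\<^sup>2)"
  defines "R_k1 \<equiv> ereal (1 / 2 * (inverse L - \<alpha>_k\<^sup>2 / \<gamma>_hat) * (norm g_k)\<^sup>2)
               + ereal (1 - \<alpha>_k) * (\<epsilon>_k + ereal R_k
                   + ereal (\<mu> * \<alpha>_k * \<gamma>_k / (2 * \<gamma>_hat) * (norm (v_k - y_k))\<^sup>2))"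
  assumes grad: "\<forall>x. GDERIV f x :> df x"
    and lip: "\<forall>x y. norm (df x - df y) \<le> L * norm (x - y)"
    and sc: "strongly_convex \<mu> f"
    and mu: "0 \<le> \<mu>" "\<mu> < L"
    and gprop: "proper_fun g" and gconv: "convex_fun g" and gclosed: "closed_fun g"
    and xk: "x_k \<in> dom_fun g"
    and alpha: "0 < \<alpha>_k" "\<alpha>_k < 1"
    and gamma: "0 < \<gamma>_k"
  shows "F x_k1 - F x_star + R_k1 + ereal (\<gamma>_hat / 2 * (norm (v_k1 - x_star))\<^sup>2)
          \<le> ereal (1 - \<alpha>_k) * (F x_k - F x_star + ereal R_k
               + ereal (\<gamma>_k / 2 * (norm (v_k - x_star))\<^sup>2))"
proof -
  have L: "L > 0" using mu by linarith
  define z where "z = T_L L df g y_k"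
  have pm: "g z \<noteq> \<infinity>" "\<forall>w. prox_obj L df g y_k z \<le> prox_obj L df g y_k w"
    using prox_min[OF gprop gconv gclosed L, of df y_k] unfolding z_def by auto
  have gk: "g_k = L *\<^sub>R (y_k - z)" unfolding g_k_def G_L_def z_def ..
  obtain Gz where Gz: "g z = ereal Gz" using pm(1) proper_ninf[OF gprop, of z] by (cases "g z") auto
  obtain Gx where Gx: "g x_k = ereal Gx"
    using xk proper_ninf[OF gprop, of x_k] by (cases "g x_k") (auto simp: dom_fun_def)
  have gh: "\<gamma>_hat > 0" unfolding \<gamma>_hat_def using alpha gamma mu
    by (simp add: add_pos_nonneg)
  have sp: "\<gamma>_k + \<alpha>_k*\<mu> > 0" using alpha gamma mu by (simp add: add_pos_nonneg)
  define ep where "ep = f x_k + Gx - (f z + Gz) - (inner g_k (x_k - y_k) + 1/(2*L)*(norm g_k)^2)"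
  have eps: "\<epsilon>_k = ereal ep" unfolding \<epsilon>_k_def F_def ep_def z_def[symmetric] Gx Gz by simp
  define Rr where "Rr = 1/2*(inverse L - \<alpha>_k^2/\<gamma>_hat)*(norm g_k)^2 + (1-\<alpha>_k)*(ep + R_k + \<mu>*\<alpha>_k*\<gamma>_k/(2*\<gamma>_hat)*(norm (v_k - y_k))^2)"
  have R1: "R_k1 = ereal Rr" unfolding R_k1_def eps Rr_def by simp
  have Fz: "F x_k1 = ereal (f z + Gz)" unfolding F_def x_k1_def z_def[symmetric] Gz by simp
  have Fx: "F x_k = ereal (f x_k + Gx)" unfolding F_def Gx by simp
  show ?thesis
  proof (cases "g x_star")
    case (real Gs)
    have Fs: "F x_star = ereal (f x_star + Gs)" unfolding F_def real by simp
    have C: "Gs \<ge> Gz + inner (g_k - df y_k) (x_star - z)"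
      using prox_subgrad[OF gprop gconv L pm(2) pm(1), of x_star] real Gz gk by simp
    have key: "f x_star + Gs \<ge> f z + Gz + inner g_k (x_star - y_k) + 1/(2*L)*(norm g_k)^2 + \<mu>/2*(norm (x_star-y_k))^2"
      by (rule combine[OF gk L sc_lower[OF grad sc] descent[OF grad lip] C])
    have ghd: "\<gamma>_hat = (1 - \<alpha>_k) * \<gamma>_k + \<mu> * \<alpha>_k" by (simp add: \<gamma>_hat_def)
    have ykd: "y_k = inverse (\<gamma>_k + \<alpha>_k * \<mu>) *\<^sub>R ((\<alpha>_k * \<gamma>_k) *\<^sub>R v_k + \<gamma>_hat *\<^sub>R x_k)"
      by (simp add: y_k_def)
    have v1d: "v_k1 = inverse \<gamma>_hat *\<^sub>R ((\<gamma>_k * (1 - \<alpha>_k)) *\<^sub>R v_k - \<alpha>_k *\<^sub>R g_k + (\<mu> * \<alpha>_k) *\<^sub>R y_k)"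
      by (simp add: v_k1_def)
    have ineq: "(f z + Gz) - (f x_star + Gs) + Rr + \<gamma>_hat/2*(norm (v_k1 - x_star))^2
        \<le> (1-\<alpha>_k)*((f x_k + Gx) - (f x_star + Gs) + R_k + \<gamma>_k/2*(norm (v_k - x_star))^2)"
      unfolding Rr_def ep_def
      by (rule final_alg[OF ghd gh _ _ _ ykd v1d key])
         (use sp L alpha in auto)
    then show ?thesis unfolding Fz Fx Fs R1 by simp
  next
    case PInf
    then have "F x_star = \<infinity>" by (simp add: F_def)
    then show ?thesis unfolding Fz R1 by simp
  next
    case MInf then show ?thesis using proper_ninf[OF gprop] by simp
  qed
qed

end
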